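(* Let $K$ and $S$ be compact Hausdorff spaces and let $T\colon C(K)\to C(S)$ be a U-embedding. Let $F_T\colon S\to C(K)^*$ be $F_T(s)=T^*(\delta_s)$ and let $A_0:=F_T^{-1}(\{\pm\delta_k: k\in K\})\subset S$ (a homeomorphic copy of $K$ inside $S$). Then $A_0$ is a zero-set of $S$, and hence a $G_\delta$-subset of $S$.
   Context: $C(K)$, $C(S)$ carry the sup norm; $C(K)^*$ is identified with regular Borel signed measures, $\delta_k$ the Dirac measure at $k$; $\{\pm\delta_k:k\in K\}$ is the set of extreme points of the unit ball of $C(K)^*$, so $A_0$ is the U-core of $T$. A linear isometry $T\colon X\to Y$ is a U-embedding if every $x^*\in X^*$ has a unique $y^*\in Y^*$ with $T^*(y^* )=x^*$ and $\|y^*\|=\|x^*\|$. A zero-set of $S$ is a set of the form $\{t\in S:f(t)=0\}$ with $f\in C(S)$. *)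

theory Defs
  imports "HOL-Analysis.Analysis"
begin

(* C(K) is modelled by the Banach space of bounded continuous real functions
  (bcontfun type, sup norm); for compact K this is exactly C(K). *)

definition dirac :: "'a::topological_space \<Rightarrow> (('a \<Rightarrow>\<^sub>C real) \<Rightarrow>\<^sub>L real)" where
  "dirac k = Blinfun (\<lambda>f. apply_bcontfun f k)"

definition adjoint_op ::
  "('a \<Rightarrow>\<^sub>L 'b::real_normed_vector) \<Rightarrow> ('b \<Rightarrow>\<^sub>L real) \<Rightarrow> ('a::real_normed_vector \<Rightarrow>\<^sub>L real)" where
  "adjoint_op T y = y o\<^sub>L T"

definition linear_isometry :: "('a::real_normed_vector \<Rightarrow>\<^sub>L 'b::real_normed_vector) \<Rightarrow> bool" where
  "linear_isometry T \<longleftrightarrow> (\<forall>x. norm (blinfun_apply T x) = norm x)"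

definition U_embedding :: "('a::real_normed_vector \<Rightarrow>\<^sub>L 'b::real_normed_vector) \<Rightarrow> bool" where
  "U_embedding T \<longleftrightarrow> linear_isometry T \<and>
     (\<forall>x :: 'a \<Rightarrow>\<^sub>L real. \<exists>!y :: 'b \<Rightarrow>\<^sub>L real. adjoint_op T y = x \<and> norm y = norm x)"

definition F_T :: "(('k::topological_space \<Rightarrow>\<^sub>C real) \<Rightarrow>\<^sub>L ('s::topological_space \<Rightarrow>\<^sub>C real))
     \<Rightarrow> 's \<Rightarrow> (('k \<Rightarrow>\<^sub>C real) \<Rightarrow>\<^sub>L real)" where
  "F_T T s = adjoint_op T (dirac s)"

definition U_core :: "(('k::topological_space \<Rightarrow>\<^sub>C real) \<Rightarrow>\<^sub>L ('s::topological_space \<Rightarrow>\<^sub>C real))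
     \<Rightarrow> 's set" where
  "U_core T = {s. \<exists>k::'k. F_T T s = dirac k \<or> F_T T s = - dirac k}"

definition zero_set :: "'a::topological_space set \<Rightarrow> bool" where
  "zero_set A \<longleftrightarrow> (\<exists>f :: 'a \<Rightarrow> real. continuous_on UNIV f \<and> A = {t. f t = 0})"

end

theory Submission
  imports Defs
begin

lemma Bcontfun_apply:
  fixes f :: "'a::topological_space \<Rightarrow> real"
  assumes "compact (UNIV::'a set)" "continuous_on UNIV f"
  shows "apply_bcontfun (Bcontfun f) = f"
proof -
  have "bounded (range f)"
    using compact_continuous_image[OF assms(2) assms(1)] compact_imp_bounded by blast
  then have "f \<in> bcontfun" using assms(2) by (simp add: bcontfun_def)
  then show ?thesis by (simp add: Bcontfun_inverse)
qed

lemma norm_const1: "norm (const_bcontfun (1::real) :: 'a::topological_space \<Rightarrow>\<^sub>C real) = 1"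
proof (rule antisym)
  show "norm (const_bcontfun (1::real) :: 'a \<Rightarrow>\<^sub>C real) \<le> 1"
    by (rule norm_bound) simp
  show "1 \<le> norm (const_bcontfun (1::real) :: 'a \<Rightarrow>\<^sub>C real)"
    using norm_bounded[of "const_bcontfun (1::real) :: 'a \<Rightarrow>\<^sub>C real" undefined] by simp
qed

lemma bl_eval: "bounded_linear (\<lambda>f::'a::topological_space \<Rightarrow>\<^sub>C real. apply_bcontfun f k)"
  by (rule bounded_linear_intro[where K=1]) (auto, metis norm_bounded real_norm_def)

lemma dirac_apply[simp]: "blinfun_apply (dirac k) f = apply_bcontfun f k"
  unfolding dirac_def by (simp add: bounded_linear_Blinfun_apply[OF bl_eval])

lemma norm_dirac: "norm (dirac (k::'a::topological_space)) = 1"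
proof (rule antisym)
  show "norm (dirac k) \<le> 1"
    by (rule norm_blinfun_bound) (auto, metis norm_bounded real_norm_def)
  have "norm (blinfun_apply (dirac k) (const_bcontfun 1)) \<le> norm (dirac k) * norm (const_bcontfun (1::real) :: 'a \<Rightarrow>\<^sub>C real)"
    by (rule norm_blinfun)
  then show "1 \<le> norm (dirac k)" by (simp add: norm_const1)
qed

lemma attains_norm:
  fixes u :: "'s::topological_space \<Rightarrow>\<^sub>C real"
  assumes "compact (UNIV::'s set)"
  shows "\<exists>s. \<bar>apply_bcontfun u s\<bar> = norm u"
proof -
  have "continuous_on UNIV (\<lambda>s. \<bar>apply_bcontfun u s\<bar>)" by (intro continuous_intros) simp
  then obtain s where s: "\<And>t. \<bar>apply_bcontfun u t\<bar> \<le> \<bar>apply_bcontfun u s\<bar>"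
    using continuous_attains_sup[OF assms] by fastforce
  have "norm u \<le> \<bar>apply_bcontfun u s\<bar>" by (rule norm_bound) (use s in auto)
  moreover have "\<bar>apply_bcontfun u s\<bar> \<le> norm u" using norm_bounded[of u s] by simp
  ultimately show ?thesis by auto
qed

lemma normal_euclidean:
  assumes "compact (UNIV::'s::t2_space set)"
  shows "normal_space (euclidean::'s topology)"
proof (rule compact_Hausdorff_or_regular_imp_normal_space)
  show "compact_space (euclidean::'s topology)"
    using assms by (simp add: compact_space_def)
  show "Hausdorff_space (euclidean::'s topology) \<or> regular_space (euclidean::'s topology)"
    by (auto simp: Hausdorff_space_def disjnt_def separation_t2)
qed

lemma urysohn_fun:
  fixes A B :: "'s::t2_space set"
  assumes "compact (UNIV::'s set)" "closed A" "closed B" "A \<inter> B = {}"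
  obtains f :: "'s \<Rightarrow> real" where "continuous_on UNIV f" "\<And>x. 0 \<le> f x" "\<And>x. f x \<le> 1"
    "\<And>x. x \<in> A \<Longrightarrow> f x = 0" "\<And>x. x \<in> B \<Longrightarrow> f x = 1"
proof -
  obtain f where f: "continuous_map euclidean (top_of_set {0..1::real}) f" "f ` A \<subseteq> {0}" "f ` B \<subseteq> {1}"
    using Urysohn_lemma[OF normal_euclidean[OF assms(1)], of A B 0 1] assms
    by (auto simp: disjnt_def)
  have "continuous_map euclidean euclideanreal f" "f ` UNIV \<subseteq> {0..1}"
    using f(1) by (auto simp: continuous_map_in_subtopology)
  then have "0 \<le> f x" "f x \<le> 1" "continuous_on UNIV f" for x by (auto simp: image_subset_iff)
  then show ?thesis by (intro that[of f]) (use f(2,3) in auto)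
qed

lemma sep_fun:
  fixes A :: "'s::t2_space set"
  assumes "compact (UNIV::'s set)" "closed A" "p \<notin> A"
  shows "\<exists>g::'s \<Rightarrow>\<^sub>C real. apply_bcontfun g p = 1 \<and> (\<forall>x\<in>A. apply_bcontfun g x = 0)"
proof -
  obtain f :: "'s \<Rightarrow> real" where f: "continuous_on UNIV f"
    "\<And>x. x \<in> A \<Longrightarrow> f x = 0" "\<And>x. x \<in> {p} \<Longrightarrow> f x = 1"
    using urysohn_fun[OF assms(1,2), of "{p}"] assms(3) by (metis closed_singleton disjoint_iff singletonD)
  show ?thesis
    by (rule exI[of _ "Bcontfun f"]) (simp add: Bcontfun_apply[OF assms(1) f(1)] f(2,3))
qed

lemma zero_set_closed_gdelta:
  fixes A :: "'s::t2_space set" and U :: "nat \<Rightarrow> 's set"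
  assumes cpt: "compact (UNIV::'s set)" and "closed A" and opn: "\<And>n. open (U n)" and AU: "A = \<Inter>(range U)"
  shows "zero_set A"
proof -
  have "\<forall>n. \<exists>f :: 's \<Rightarrow> real. continuous_on UNIV f \<and> (\<forall>x. 0 \<le> f x \<and> f x \<le> 1) \<and>
      (\<forall>x\<in>A. f x = 0) \<and> (\<forall>x\<in>- U n. f x = 1)"
  proof
    fix n
    have "closed (- U n)" using opn by auto
    moreover have "A \<inter> - U n = {}" using AU by auto
    ultimately obtain f :: "'s \<Rightarrow> real" where "continuous_on UNIV f" "\<And>x. 0 \<le> f x" "\<And>x. f x \<le> 1"
      "\<And>x. x \<in> A \<Longrightarrow> f x = 0" "\<And>x. x \<in> - U n \<Longrightarrow> f x = 1"
      using urysohn_fun[OF cpt \<open>closed A\<close>] by metis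
    then show "\<exists>f :: 's \<Rightarrow> real. continuous_on UNIV f \<and> (\<forall>x. 0 \<le> f x \<and> f x \<le> 1) \<and>
      (\<forall>x\<in>A. f x = 0) \<and> (\<forall>x\<in>- U n. f x = 1)" by blast
  qed
  then obtain F :: "nat \<Rightarrow> 's \<Rightarrow> real" where F: "\<And>n. continuous_on UNIV (F n)"
    "\<And>n x. 0 \<le> F n x" "\<And>n x. F n x \<le> 1" "\<And>n x. x \<in> A \<Longrightarrow> F n x = 0"
    "\<And>n x. x \<notin> U n \<Longrightarrow> F n x = 1"
    by (metis ComplI)
  define g where "g n x = (1/2::real)^n * F n x" for n x
  have summ: "summable (\<lambda>n. (1/2::real)^n)" by (rule summable_geometric) simp
  have bnd: "norm (g n x) \<le> (1/2)^n" for n x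
    using F(2,3)[of n x] by (simp add: g_def abs_mult mult_le_cancel_left1)
  have ul: "uniform_limit UNIV (\<lambda>n x. \<Sum>i<n. g i x) (\<lambda>x. suminf (\<lambda>i. g i x)) sequentially"
    by (rule Weierstrass_m_test[OF _ summ]) (use bnd in auto)
  have cont: "continuous_on UNIV (\<lambda>x. suminf (\<lambda>i. g i x))"
    by (rule uniform_limit_theorem[OF _ ul]) (auto intro!: always_eventually continuous_intros F(1) simp: g_def)
  have sg: "summable (\<lambda>i. g i x)" for x
    by (rule summable_comparison_test'[OF summ]) (use bnd in auto)
  have "A = {x. suminf (\<lambda>i. g i x) = 0}"
  proof safe
    fix x assume "x \<in> A" then show "suminf (\<lambda>i. g i x) = 0" by (simp add: g_def F(4))
  next
    fix x assume x0: "suminf (\<lambda>i. g i x) = 0"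
    show "x \<in> A"
    proof (rule ccontr)
      assume "x \<notin> A"
      then obtain n where "x \<notin> U n" using AU by auto
      then have "0 < g n x" by (simp add: g_def F(5))
      then have "0 < suminf (\<lambda>i. g i x)"
        by (intro suminf_pos2[OF sg, of x n]) (simp_all add: g_def F(2))
      with x0 show False by simp
    qed
  qed
  then show ?thesis unfolding zero_set_def using cont by blast
qed

lemma iso_norm_le: "linear_isometry T \<Longrightarrow> norm T \<le> 1"
  unfolding linear_isometry_def by (intro norm_blinfun_bound) auto

lemma T_apply_le:
  fixes T :: "('k::topological_space \<Rightarrow>\<^sub>C real) \<Rightarrow>\<^sub>L ('s::topological_space \<Rightarrow>\<^sub>C real)"
  assumes "linear_isometry T"
  shows "\<bar>apply_bcontfun (blinfun_apply T g) s\<bar> \<le> norm g"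
  using norm_bounded[of "blinfun_apply T g" s] assms unfolding linear_isometry_def by simp

lemma exist_finite:
  fixes T :: "('k::t2_space \<Rightarrow>\<^sub>C real) \<Rightarrow>\<^sub>L ('s::t2_space \<Rightarrow>\<^sub>C real)"
  assumes cK: "compact (UNIV::'k set)" and cS: "compact (UNIV::'s set)" and iso: "linear_isometry T"
    and G: "finite G" "\<And>g. g \<in> G \<Longrightarrow> apply_bcontfun g k = 0"
  shows "\<exists>s. \<bar>apply_bcontfun (blinfun_apply T (const_bcontfun 1)) s\<bar> = 1 \<and>
     (\<forall>g\<in>G. apply_bcontfun (blinfun_apply T g) s = 0)"
proof -
  define h where "h x = (\<Sum>g\<in>G. \<bar>apply_bcontfun g x\<bar>)" for x
  define fx where "fx x = max 0 (1 - h x)" for x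
  have hcont: "continuous_on UNIV h" unfolding h_def by (intro continuous_intros) auto
  have fcont: "continuous_on UNIV fx" unfolding fx_def by (intro continuous_intros hcont)
  define f where "f = Bcontfun fx"
  have fap[simp]: "apply_bcontfun f = fx" unfolding f_def by (rule Bcontfun_apply[OF cK fcont])
  have h0: "0 \<le> h x" for x unfolding h_def by (intro sum_nonneg) auto
  have hk: "h k = 0" unfolding h_def using G(2) by simp
  have f01: "0 \<le> fx x" "fx x \<le> 1" for x using h0[of x] by (auto simp: fx_def)
  have nf: "norm f = 1"
  proof (rule antisym)
    show "norm f \<le> 1" by (rule norm_bound) (use f01 in auto)
    show "1 \<le> norm f" using norm_bounded[of f k] hk by (simp add: fx_def)
  qed
  have "norm (blinfun_apply T f) = 1" using iso nf unfolding linear_isometry_def by simp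
  then obtain s where s: "\<bar>apply_bcontfun (blinfun_apply T f) s\<bar> = 1"
    using attains_norm[OF cS, of "blinfun_apply T f"] by auto
  define c0 where "c0 = apply_bcontfun (blinfun_apply T f) s"
  have key: "apply_bcontfun (blinfun_apply T u) s = 0" if u: "\<And>x. \<bar>apply_bcontfun u x\<bar> \<le> 1 - fx x" for u
  proof -
    have "norm (f + u) \<le> 1"
    proof (rule norm_bound)
      fix x show "norm (apply_bcontfun (f + u) x) \<le> 1" using u[of x] f01[of x] by (simp add: abs_le_iff)
    qed
    then have a: "\<bar>c0 + apply_bcontfun (blinfun_apply T u) s\<bar> \<le> 1"
      using T_apply_le[OF iso, of "f + u" s] by (simp add: blinfun.add_right c0_def)
    have "norm (f - u) \<le> 1"
    proof (rule norm_bound)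
      fix x show "norm (apply_bcontfun (f - u) x) \<le> 1" using u[of x] f01[of x] by (simp add: abs_le_iff)
    qed
    then have b: "\<bar>c0 - apply_bcontfun (blinfun_apply T u) s\<bar> \<le> 1"
      using T_apply_le[OF iso, of "f - u" s] by (simp add: blinfun.diff_right c0_def)
    show ?thesis using a b s unfolding c0_def by (auto simp: abs_le_iff abs_if split: if_splits)
  qed
  have key2: "apply_bcontfun (blinfun_apply T u) s = 0"
    if c: "c > 0" and u: "\<And>x. \<bar>apply_bcontfun u x\<bar> \<le> c * (1 - fx x)" for u c
  proof -
    have "\<bar>apply_bcontfun ((1/c) *\<^sub>R u) x\<bar> \<le> 1 - fx x" for x
      using u[of x] c by (simp add: abs_mult divide_simps mult.commute)
    then have "apply_bcontfun (blinfun_apply T ((1/c) *\<^sub>R u)) s = 0" by (rule key)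
    then show ?thesis using c by (simp add: blinfun.scaleR_right)
  qed
  have "\<forall>g\<in>G. apply_bcontfun (blinfun_apply T g) s = 0"
  proof
    fix g assume gG: "g \<in> G"
    define c where "c = max 1 (norm g)"
    show "apply_bcontfun (blinfun_apply T g) s = 0"
    proof (rule key2[of c])
      show "0 < c" by (simp add: c_def)
      fix x
      have gx: "\<bar>apply_bcontfun g x\<bar> \<le> norm g" using norm_bounded[of g x] by simp
      have gh: "\<bar>apply_bcontfun g x\<bar> \<le> h x"
        unfolding h_def using G(1) gG by (intro member_le_sum) auto
      show "\<bar>apply_bcontfun g x\<bar> \<le> c * (1 - fx x)"
      proof (cases "h x \<ge> 1")
        case True then show ?thesis using gx by (simp add: fx_def c_def)
      next
        case False
        then have "1 - fx x = h x" by (simp add: fx_def)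
        moreover have "h x \<le> c * h x" using h0[of x] by (simp add: c_def mult_le_cancel_right1)
        ultimately show ?thesis using gh by simp
      qed
    qed
  qed
  moreover have "apply_bcontfun (blinfun_apply T (const_bcontfun 1 - f)) s = 0"
    by (rule key) (use f01 in auto)
  then have "apply_bcontfun (blinfun_apply T (const_bcontfun 1)) s = c0"
    by (simp add: blinfun.diff_right c0_def)
  ultimately show ?thesis using s c0_def by (intro exI[of _ s]) simp
qed

lemma exist_point:
  fixes T :: "('k::t2_space \<Rightarrow>\<^sub>C real) \<Rightarrow>\<^sub>L ('s::t2_space \<Rightarrow>\<^sub>C real)"
  assumes cK: "compact (UNIV::'k set)" and cS: "compact (UNIV::'s set)" and iso: "linear_isometry T"
  shows "\<exists>s. \<bar>apply_bcontfun (blinfun_apply T (const_bcontfun 1)) s\<bar> = 1 \<and>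
     (\<forall>g. apply_bcontfun (blinfun_apply T g) s = apply_bcontfun (blinfun_apply T (const_bcontfun 1)) s * apply_bcontfun g k)"
proof -
  define M where "M = {g::'k \<Rightarrow>\<^sub>C real. apply_bcontfun g k = 0}"
  define C where "C g = {s. \<bar>apply_bcontfun (blinfun_apply T (const_bcontfun 1)) s\<bar> = 1 \<and> apply_bcontfun (blinfun_apply T g) s = 0}" for g
  have "UNIV \<inter> \<Inter>(C ` M) \<noteq> {}"
  proof (rule compact_imp_fip[OF cS])
    fix X assume "X \<in> C ` M"
    then obtain g where "X = C g" by auto
    moreover have "closed (C g)" unfolding C_def
      by (intro closed_Collect_conj closed_Collect_eq continuous_intros) auto
    ultimately show "closed X" by simp
  next
    fix F' assume F': "finite F'" "F' \<subseteq> C ` M"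
    then obtain G where G: "G \<subseteq> M" "finite G" "F' = C ` G" by (meson finite_subset_image)
    obtain s where "\<bar>apply_bcontfun (blinfun_apply T (const_bcontfun 1)) s\<bar> = 1 \<and>
     (\<forall>g\<in>G. apply_bcontfun (blinfun_apply T g) s = 0)"
      using exist_finite[OF cK cS iso G(2), of k] G(1) by (auto simp: M_def)
    then have "s \<in> UNIV \<inter> \<Inter>F'" using G(3) by (auto simp: C_def)
    then show "UNIV \<inter> \<Inter>F' \<noteq> {}" by blast
  qed
  then obtain s where s: "\<And>g. g \<in> M \<Longrightarrow> s \<in> C g" by blast
  have "0 \<in> M" by (simp add: M_def)
  then have s1: "\<bar>apply_bcontfun (blinfun_apply T (const_bcontfun 1)) s\<bar> = 1"
    using s[of 0] by (simp add: C_def)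
  have "apply_bcontfun (blinfun_apply T g) s = apply_bcontfun (blinfun_apply T (const_bcontfun 1)) s * apply_bcontfun g k" for g
  proof -
    have "g - apply_bcontfun g k *\<^sub>R const_bcontfun 1 \<in> M" by (simp add: M_def)
    then have "apply_bcontfun (blinfun_apply T (g - apply_bcontfun g k *\<^sub>R const_bcontfun 1)) s = 0"
      using s by (auto simp: C_def)
    then show ?thesis by (simp add: blinfun.diff_right blinfun.scaleR_right mult.commute)
  qed
  with s1 show ?thesis by blast
qed

lemma cont_apply_bcontfun_comp[continuous_intros]:
  "continuous_on UNIV h \<Longrightarrow> continuous_on UNIV (\<lambda>z. apply_bcontfun f (h z))"
  by (rule continuous_on_compose2[OF continuous_on_apply_bcontfun]) auto

lemma F_T_apply: "blinfun_apply (F_T T s) g = apply_bcontfun (blinfun_apply T g) s"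
  by (simp add: F_T_def adjoint_op_def)

lemma unique_point:
  fixes T :: "('k::t2_space \<Rightarrow>\<^sub>C real) \<Rightarrow>\<^sub>L ('s::t2_space \<Rightarrow>\<^sub>C real)"
  assumes cS: "compact (UNIV::'s set)" and U: "U_embedding T"
    and c: "\<bar>c\<bar> = 1" "\<bar>c'\<bar> = 1"
    and s: "\<And>g. apply_bcontfun (blinfun_apply T g) s = c * apply_bcontfun g k"
    and s': "\<And>g. apply_bcontfun (blinfun_apply T g) s' = c' * apply_bcontfun g k"
  shows "s = s'"
proof (rule ccontr)
  assume ne: "s \<noteq> s'"
  have cc: "c * c = 1" "c' * c' = 1" using c by (auto simp: abs_if split: if_splits)
  have a1: "adjoint_op T (c *\<^sub>R dirac s) = dirac k"
    by (rule blinfun_eqI) (simp add: adjoint_op_def s mult.assoc[symmetric] cc blinfun.scaleR_left)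
  have a2: "adjoint_op T (c' *\<^sub>R dirac s') = dirac k"
    by (rule blinfun_eqI) (simp add: adjoint_op_def s' mult.assoc[symmetric] cc blinfun.scaleR_left)
  have n1: "norm (c *\<^sub>R dirac s) = norm (dirac k)" "norm (c' *\<^sub>R dirac s') = norm (dirac k)"
    using c by (simp_all add: norm_dirac)
  have "\<exists>!y. adjoint_op T y = dirac k \<and> norm y = norm (dirac k)"
    using U unfolding U_embedding_def by blast
  then have eq: "c *\<^sub>R dirac s = c' *\<^sub>R dirac s'" using a1 a2 n1 by blast
  have "c = c'" using arg_cong[OF eq, of "\<lambda>y. blinfun_apply y (const_bcontfun 1)"] by (simp add: blinfun.scaleR_left)
  obtain g :: "'s \<Rightarrow>\<^sub>C real" where g: "apply_bcontfun g s' = 1" "apply_bcontfun g s = 0"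
    using sep_fun[OF cS, of "{s}" s'] ne by auto
  have "c * apply_bcontfun g s = c' * apply_bcontfun g s'"
    using arg_cong[OF eq, of "\<lambda>y. blinfun_apply y g"] by (simp add: blinfun.scaleR_left)
  then show False using g c by simp
qed

lemma norm_gt_witness:
  fixes x :: "'a::real_normed_vector \<Rightarrow>\<^sub>L real"
  assumes "0 \<le> c"
  shows "c < norm x \<longleftrightarrow> (\<exists>g. norm g \<le> 1 \<and> c < \<bar>blinfun_apply x g\<bar>)"
proof
  assume "\<exists>g. norm g \<le> 1 \<and> c < \<bar>blinfun_apply x g\<bar>"
  then obtain g where g: "norm g \<le> 1" "c < \<bar>blinfun_apply x g\<bar>" by blast
  have "\<bar>blinfun_apply x g\<bar> \<le> norm x * norm g" using norm_blinfun[of x g] by simp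
  also have "\<dots> \<le> norm x" using g(1) by (simp add: mult_left_le)
  finally show "c < norm x" using g(2) by simp
next
  assume cx: "c < norm x"
  show "\<exists>g. norm g \<le> 1 \<and> c < \<bar>blinfun_apply x g\<bar>"
  proof (rule ccontr)
    assume "\<not> ?thesis"
    then have h: "norm g \<le> 1 \<Longrightarrow> \<bar>blinfun_apply x g\<bar> \<le> c" for g by force
    have "norm x \<le> c"
    proof (rule norm_blinfun_bound[OF assms])
      fix g
      show "norm (blinfun_apply x g) \<le> c * norm g"
      proof (cases "g = 0")
        case True then show ?thesis by simp
      next
        case False
        then have "\<bar>blinfun_apply x ((1 / norm g) *\<^sub>R g)\<bar> \<le> c" by (intro h) simp
        then show ?thesis using False by (simp add: blinfun.scaleR_right abs_mult divide_simps mult.commute)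
      qed
    qed
    with cx show False by simp
  qed
qed

theorem corollary6p21:
  fixes T :: "('k::t2_space \<Rightarrow>\<^sub>C real) \<Rightarrow>\<^sub>L ('s::t2_space \<Rightarrow>\<^sub>C real)"
  assumes "compact (UNIV :: 'k set)" and "compact (UNIV :: 's set)"
    and "U_embedding T"
  shows "zero_set (U_core T) \<and> gdelta_in euclidean (U_core T)"
proof -
  note cK = assms(1) and cS = assms(2) and U = assms(3)
  have iso: "linear_isometry T" using U by (simp add: U_embedding_def)
  define tv where "tv g s = apply_bcontfun (blinfun_apply T g) s" for g s
  define one where "one = (const_bcontfun 1 :: 'k \<Rightarrow>\<^sub>C real)"
  define P where "P k s \<longleftrightarrow> \<bar>tv one s\<bar> = 1 \<and> (\<forall>g. tv g s = tv one s * apply_bcontfun g k)" for k s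
  have exP: "\<exists>s. P k s" for k
    unfolding P_def tv_def one_def by (rule exist_point[OF cK cS iso])
  have uqP: "s = s'" if "P k s" "P k s'" for k s s'
  proof -
    have a: "\<bar>tv one s\<bar> = 1" "\<And>g. tv g s = tv one s * apply_bcontfun g k"
      using that(1) unfolding P_def by blast+
    have b: "\<bar>tv one s'\<bar> = 1" "\<And>g. tv g s' = tv one s' * apply_bcontfun g k"
      using that(2) unfolding P_def by blast+
    show ?thesis by (rule unique_point[OF cS U a(1)[unfolded tv_def] b(1)[unfolded tv_def] a(2)[unfolded tv_def] b(2)[unfolded tv_def]])
  qed
  define \<sigma> where "\<sigma> k = (THE s. P k s)" for k
  have P\<sigma>: "P k (\<sigma> k)" for k
    unfolding \<sigma>_def using exP uqP by (metis theI)
  have \<sigma>eq: "P k s \<Longrightarrow> s = \<sigma> k" for k s using P\<sigma> uqP by blast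
  have closedGr: "closed {z. P (fst z) (snd z)}"
    unfolding P_def tv_def
    by (intro closed_Collect_conj closed_Collect_all closed_Collect_eq continuous_intros)
  have cont\<sigma>: "continuous_on UNIV \<sigma>"
    unfolding continuous_on_closed_vimage[OF closed_UNIV]
  proof (intro allI impI)
    fix B :: "'s set" assume B: "closed B"
    have eq: "\<sigma> -` B \<inter> UNIV = fst ` ({z. P (fst z) (snd z)} \<inter> (UNIV \<times> B))"
    proof safe
      fix k assume "\<sigma> k \<in> B"
      then show "k \<in> fst ` ({z. P (fst z) (snd z)} \<inter> (UNIV \<times> B))"
        using P\<sigma>[of k] by (auto intro!: image_eqI[of _ _ "(k, \<sigma> k)"])
    next
      fix k s assume "P (fst (k, s)) (snd (k, s))" "s \<in> B"
      then show "fst (k, s) \<in> \<sigma> -` B" using \<sigma>eq by auto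
    qed auto
    have cm: "closed_map (prod_topology (euclidean :: 'k topology) (euclidean :: 's topology)) (euclidean :: 'k topology) fst"
      by (rule closed_map_fst) (use cS in \<open>simp add: compact_space_def\<close>)
    have "closed ({z. P (fst z) (snd z)} \<inter> (UNIV \<times> B))"
      by (intro closed_Int closedGr closed_Times B closed_UNIV)
    then have "closed (fst ` ({z. P (fst z) (snd z)} \<inter> (UNIV \<times> B)) :: 'k set)"
      using cm unfolding closed_map_def by simp
    then show "closed (\<sigma> -` B \<inter> UNIV)" using eq by simp
  qed
  define \<epsilon> where "\<epsilon> k = tv one (\<sigma> k)" for k
  have \<epsilon>1: "\<bar>\<epsilon> k\<bar> = 1" for k using P\<sigma>[of k] unfolding P_def \<epsilon>_def by blast
  have \<epsilon>sq: "\<epsilon> k * \<epsilon> k = 1" for k using \<epsilon>1[of k] by (auto simp: abs_if split: if_splits)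
  have tv\<sigma>: "tv g (\<sigma> k) = \<epsilon> k * apply_bcontfun g k" for g k
    using P\<sigma>[of k] unfolding P_def \<epsilon>_def by blast
  have cont\<epsilon>: "continuous_on UNIV \<epsilon>"
    unfolding \<epsilon>_def tv_def by (intro continuous_intros cont\<sigma>)
  define L where "L g = Bcontfun (\<lambda>k. \<epsilon> k * apply_bcontfun g (\<sigma> k))" for g :: "'s \<Rightarrow>\<^sub>C real"
  have Lap: "apply_bcontfun (L g) = (\<lambda>k. \<epsilon> k * apply_bcontfun g (\<sigma> k))" for g
    unfolding L_def by (intro Bcontfun_apply cK continuous_intros cont\<epsilon> cont\<sigma>)
  have Lbl: "bounded_linear L"
  proof (rule bounded_linear_intro[where K=1])
    show "L (x + y) = L x + L y" for x y by (rule bcontfun_eqI) (simp add: Lap algebra_simps)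
    show "L (r *\<^sub>R x) = r *\<^sub>R L x" for r x by (rule bcontfun_eqI) (simp add: Lap algebra_simps)
    show "norm (L x) \<le> norm x * 1" for x
    proof -
      have "norm (L x) \<le> norm x"
      proof (rule norm_bound)
        fix k show "norm (apply_bcontfun (L x) k) \<le> norm x"
          using norm_bounded[of x "\<sigma> k"] \<epsilon>1[of k] by (simp add: Lap abs_mult)
      qed
      then show ?thesis by simp
    qed
  qed
  define Lb where "Lb = Blinfun L"
  have Lbap: "blinfun_apply Lb = L" unfolding Lb_def by (rule bounded_linear_Blinfun_apply[OF Lbl])
  have nLb: "norm Lb \<le> 1"
  proof (rule norm_blinfun_bound)
    fix x show "norm (blinfun_apply Lb x) \<le> 1 * norm x"
      unfolding Lbap
    proof (simp, rule norm_bound)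
      fix k show "norm (apply_bcontfun (L x) k) \<le> norm x"
        using norm_bounded[of x "\<sigma> k"] \<epsilon>1[of k] by (simp add: Lap abs_mult)
    qed
  qed simp
  have LT: "L (blinfun_apply T f) = f" for f
    by (rule bcontfun_eqI) (simp add: Lap tv\<sigma>[unfolded tv_def] mult.assoc[symmetric] \<epsilon>sq)
  have nT: "norm T \<le> 1" by (rule iso_norm_le[OF iso])
  have nF: "norm (F_T T s) \<le> 1" for s
  proof -
    have "norm (F_T T s) \<le> norm (dirac s) * norm T"
      unfolding F_T_def adjoint_op_def by (rule norm_blinfun_compose)
    then show ?thesis using nT by (simp add: norm_dirac)
  qed
  have Fsig: "F_T T (\<sigma> k) = \<epsilon> k *\<^sub>R dirac k" for k
    by (rule blinfun_eqI) (simp add: F_T_apply blinfun.scaleR_left tv\<sigma>[unfolded tv_def])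
  have c1: "U_core T \<subseteq> range \<sigma>"
  proof
    fix s assume "s \<in> U_core T"
    then obtain k where k: "F_T T s = dirac k \<or> F_T T s = - dirac k" by (auto simp: U_core_def)
    have "P k s"
    proof (cases "F_T T s = dirac k")
      case True
      then have "tv g s = apply_bcontfun g k" for g
        using F_T_apply[of T s g] by (simp add: tv_def blinfun.minus_left)
      then show ?thesis unfolding P_def by (simp add: one_def)
    next
      case False
      then have "F_T T s = - dirac k" using k by simp
      then have "tv g s = - apply_bcontfun g k" for g
        using F_T_apply[of T s g] by (simp add: tv_def blinfun.minus_left)
      then show ?thesis unfolding P_def by (simp add: one_def)
    qed
    then show "s \<in> range \<sigma>" using \<sigma>eq by blast
  qed
  have c2: "range \<sigma> \<subseteq> U_core T"
  proof clarify
    fix k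
    show "\<sigma> k \<in> U_core T"
    proof (cases "\<epsilon> k = 1")
      case True then show ?thesis using Fsig[of k] by (auto simp: U_core_def)
    next
      case False then have "\<epsilon> k = -1" using \<epsilon>1[of k] by (auto simp: abs_if split: if_splits)
      then show ?thesis using Fsig[of k] by (auto simp: U_core_def)
    qed
  qed
  have c3: "norm (F_T T (\<sigma> k)) = 1" for k using Fsig[of k] \<epsilon>1[of k] by (simp add: norm_dirac)
  have closed\<sigma>: "closed (range \<sigma>)"
    by (intro compact_imp_closed compact_continuous_image cont\<sigma> cK)
  have c4: "p \<in> range \<sigma>" if p: "1 \<le> norm (F_T T p)" for p
  proof (rule ccontr)
    assume np: "p \<notin> range \<sigma>"
    define x where "x = F_T T p"
    have nx: "norm x = 1" using p nF[of p] by (simp add: x_def)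
    define y2 where "y2 = x o\<^sub>L Lb"
    have a1: "adjoint_op T (dirac p) = x" by (simp add: x_def F_T_def)
    have a2: "adjoint_op T y2 = x"
      by (rule blinfun_eqI) (simp add: adjoint_op_def y2_def Lbap LT)
    have "norm y2 \<le> norm x * norm Lb" unfolding y2_def by (rule norm_blinfun_compose)
    also have "\<dots> \<le> norm x" using nLb by (simp add: mult_left_le)
    finally have le1: "norm y2 \<le> norm x" .
    have "norm x \<le> norm y2 * norm T" using a2 norm_blinfun_compose[of y2 T] by (simp add: adjoint_op_def)
    also have "\<dots> \<le> norm y2" using nT by (simp add: mult_left_le)
    finally have n2: "norm y2 = norm x" using le1 by simp
    have "\<exists>!y. adjoint_op T y = x \<and> norm y = norm x" using U unfolding U_embedding_def by blast
    then have eq: "dirac p = y2" using a1 a2 n2 nx by (metis norm_dirac)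
    obtain g :: "'s \<Rightarrow>\<^sub>C real" where g: "apply_bcontfun g p = 1" "\<And>z. z \<in> range \<sigma> \<Longrightarrow> apply_bcontfun g z = 0"
      using sep_fun[OF cS closed\<sigma> np] by blast
    have "L g = 0" by (rule bcontfun_eqI) (simp add: Lap g(2))
    then have "blinfun_apply y2 g = 0" by (simp add: y2_def Lbap)
    moreover have "blinfun_apply (dirac p) g = 1" using g by simp
    ultimately show False using eq by simp
  qed
  have core_eq: "U_core T = range \<sigma>" using c1 c2 by blast
  have core_eq2: "U_core T = {s. 1 \<le> norm (F_T T s)}"
  proof (rule set_eqI)
    fix s show "s \<in> U_core T \<longleftrightarrow> s \<in> {s. 1 \<le> norm (F_T T s)}"
    proof
      assume "s \<in> U_core T"
      then obtain k where "s = \<sigma> k" using c1 by blast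
      then show "s \<in> {s. 1 \<le> norm (F_T T s)}" using c3 by simp
    next
      assume "s \<in> {s. 1 \<le> norm (F_T T s)}"
      then have "s \<in> range \<sigma>" using c4 by simp
      then show "s \<in> U_core T" using c2 by blast
    qed
  qed
  define V where "V n = {s. 1 - 1 / real (Suc n) < norm (F_T T s)}" for n
  have openV: "open (V n)" for n
  proof -
    have c0: "0 \<le> 1 - 1 / real (Suc n)" by (simp add: field_simps)
    have "V n = (\<Union>g\<in>{g. norm g \<le> 1}. {s. 1 - 1 / real (Suc n) < \<bar>tv g s\<bar>})"
    proof (rule set_eqI)
      fix s show "s \<in> V n \<longleftrightarrow> s \<in> (\<Union>g\<in>{g. norm g \<le> 1}. {s. 1 - 1 / real (Suc n) < \<bar>tv g s\<bar>})"
        unfolding V_def using norm_gt_witness[OF c0, of "F_T T s"] by (simp add: F_T_apply tv_def)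
    qed
    moreover have "open {s. 1 - 1 / real (Suc n) < \<bar>tv g s\<bar>}" for g
      unfolding tv_def by (intro open_Collect_less continuous_intros) auto
    ultimately show ?thesis by auto
  qed
  have VI: "U_core T = \<Inter>(range V)"
  proof -
    have "{s. 1 \<le> norm (F_T T s)} = \<Inter>(range V)"
    proof safe
      fix s n assume "1 \<le> norm (F_T T s)"
      moreover have "0 < 1 / real (Suc n)" by simp
      ultimately show "s \<in> V n" unfolding V_def mem_Collect_eq by linarith
    next
      fix s assume s: "s \<in> \<Inter>(range V)"
      show "1 \<le> norm (F_T T s)"
      proof (rule ccontr)
        assume "\<not> 1 \<le> norm (F_T T s)"
        then have "0 < 1 - norm (F_T T s)" by simp
        then obtain n where n: "inverse (real (Suc n)) < 1 - norm (F_T T s)"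
          using reals_Archimedean by blast
        have "s \<in> V n" using s by auto
        then have "1 - 1 / real (Suc n) < norm (F_T T s)" unfolding V_def mem_Collect_eq .
        with n show False unfolding inverse_eq_divide by linarith
      qed
    qed
    then show ?thesis using core_eq2 by simp
  qed
  have zs: "zero_set (U_core T)"
    by (rule zero_set_closed_gdelta[OF cS _ openV VI]) (simp add: core_eq closed\<sigma>)
  have gd: "gdelta_in euclidean (U_core T)"
    unfolding gdelta_in_alt intersection_of_def
    by (intro conjI exI[of _ "range V"]) (auto simp: VI openV)
  show ?thesis using zs gd by blast
qed

end
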